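(* Let $(T_1,T_2)$ be an ordered binary forest on $\{1,\dots,m-1\}$, let $x_i=|L(T_i)|$ for $i=1,2$, and assume $x_1\ge x_2$. Let $T_0$ be the binary phylogenetic tree on $\{1,\dots,m\}$ with root $z$ having children $a$ and the leaf $m$, where $a$ has children the roots of $T_1$ and $T_2$. Let $T$ be a binary phylogenetic tree with $n$ leaves having $T_0$ as the subtree rooted at some node. If $\Phi(T)$ is minimum among all binary phylogenetic trees with $n$ leaves, then $x_1=x_2=1$.
   Context: A phylogenetic tree on a finite set $S$ is a rooted tree whose leaves are bijectively labeled by $S$, every internal node having at least two children; binary means exactly two children; a tree with $n$ leaves is one on $\{1,\dots,n\}$. $L(T)$ is the leaf set. An ordered binary $k$-forest on $S$ is a sequence of $k$ binary phylogenetic trees on pairwise disjoint sets with union $S$. The subtree rooted at a node $v$ is the subgraph induced on the descendants of $v$. The depth $\delta_T(v)$ is the number of arcs from the root to $v$; for leaves $i\ne j$, $\varphi_T(i,j)=\delta_T(LCA_T(i,j))$ ($LCA$ = lowest common ancestor), and $\Phi(T)$ is the sum of $\varphi_T(i,j)$ over all unordered pairs of distinct leaves. *)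

theory Defs
  imports Main "HOL-Library.Sublist"
begin

text \<open>The child order of the datatype is irrelevant; trees are compared up to swapping
  children via \<open>tree_iso\<close>.\<close>

datatype btree = Leaf nat | Node btree btree

fun leaves :: "btree \<Rightarrow> nat list" where
  "leaves (Leaf a) = [a]"
| "leaves (Node l r) = leaves l @ leaves r"

definition L :: "btree \<Rightarrow> nat set" where
  "L t = set (leaves t)"

definition phylo_on :: "nat set \<Rightarrow> btree \<Rightarrow> bool" where
  "phylo_on S t \<longleftrightarrow> distinct (leaves t) \<and> set (leaves t) = S"

definition forest2_on :: "nat set \<Rightarrow> btree \<Rightarrow> btree \<Rightarrow> bool" where
  "forest2_on S t1 t2 \<longleftrightarrow> phylo_on (L t1) t1 \<and> phylo_on (L t2) t2
      \<and> L t1 \<inter> L t2 = {} \<and> L t1 \<union> L t2 = S"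

text \<open>node positions as paths from the root (False = left, True = right)\<close>
fun pos :: "btree \<Rightarrow> bool list set" where
  "pos (Leaf a) = {[]}"
| "pos (Node l r) = {[]} \<union> Cons False ` pos l \<union> Cons True ` pos r"

fun sub :: "btree \<Rightarrow> bool list \<Rightarrow> btree" where
  "sub t [] = t"
| "sub (Node l r) (False # p) = sub l p"
| "sub (Node l r) (True # p) = sub r p"
| "sub (Leaf a) (b # p) = Leaf a"

inductive tree_iso :: "btree \<Rightarrow> btree \<Rightarrow> bool" where
  "tree_iso (Leaf a) (Leaf a)"
| "tree_iso l l' \<Longrightarrow> tree_iso r r' \<Longrightarrow> tree_iso (Node l r) (Node l' r')"
| "tree_iso l r' \<Longrightarrow> tree_iso r l' \<Longrightarrow> tree_iso (Node l r) (Node l' r')"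

definition leaf_pos :: "btree \<Rightarrow> nat \<Rightarrow> bool list" where
  "leaf_pos t i = (THE p. p \<in> pos t \<and> sub t p = Leaf i)"

text \<open>depth of the node at position p is its length; ancestors of p are its prefixes;
  \<open>phi t i j\<close> is the depth of the lowest common ancestor of leaves i and j\<close>
definition phi :: "btree \<Rightarrow> nat \<Rightarrow> nat \<Rightarrow> nat" where
  "phi t i j = Max {length v | v. v \<in> pos t \<and> prefix v (leaf_pos t i) \<and> prefix v (leaf_pos t j)}"

definition Phi :: "btree \<Rightarrow> nat" where
  "Phi t = (\<Sum>(i, j) \<in> {(i, j). i \<in> L t \<and> j \<in> L t \<and> i < j}. phi t i j)"

end

theory Submission imports Defs "HOL-Library.Multiset" begin

lemma card_pairs:
  assumes "finite (A::nat set)"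
  shows "card {(i,j). i\<in>A \<and> j\<in>A \<and> i<j} = card A choose 2"
proof -
  let ?P = "{(i,j). i\<in>A \<and> j\<in>A \<and> i<j}"
  have inj: "inj_on (\<lambda>(i,j). {i,j}) ?P"
    by (auto simp: inj_on_def doubleton_eq_iff)
  have img: "(\<lambda>(i,j). {i,j}) ` ?P = {B. B \<subseteq> A \<and> card B = 2}"
  proof
    show "(\<lambda>(i,j). {i,j}) ` ?P \<subseteq> {B. B \<subseteq> A \<and> card B = 2}" by auto
  next
    show "{B. B \<subseteq> A \<and> card B = 2} \<subseteq> (\<lambda>(i,j). {i,j}) ` ?P"
    proof
      fix B assume "B \<in> {B. B \<subseteq> A \<and> card B = 2}"
      then obtain x y where B: "B = {x,y}" "x \<noteq> y" "B \<subseteq> A" by (auto simp: card_2_iff)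
      show "B \<in> (\<lambda>(i,j). {i,j}) ` ?P"
      proof (cases "x < y")
        case True then show ?thesis using B by (auto intro!: image_eqI[of _ _ "(x,y)"])
      next
        case False then have "y < x" using B by simp
        then show ?thesis using B by (auto intro!: image_eqI[of _ _ "(y,x)"])
      qed
    qed
  qed
  have "card ?P = card ((\<lambda>(i,j). {i,j}) ` ?P)" using card_image[OF inj] by simp
  also have "\<dots> = card A choose 2" using img n_subsets[OF assms] by simp
  finally show ?thesis .
qed

fun Q :: "btree \<Rightarrow> nat" where
  "Q (Leaf a) = 0"
| "Q (Node l r) = Q l + Q r + (length (leaves l) choose 2) + (length (leaves r) choose 2)"

lemma finite_pos: "finite (pos t)" by (induction t) auto
lemma nil_pos: "[] \<in> pos t" by (cases t) auto
lemma leaves_ne: "leaves t \<noteq> []" by (induction t) auto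

lemma leaf_ex: "i \<in> set (leaves t) \<Longrightarrow> \<exists>p\<in>pos t. sub t p = Leaf i"
proof (induction t)
  case (Leaf a) then show ?case by auto
next
  case (Node l r)
  show ?case
  proof (cases "i \<in> set (leaves l)")
    case True
    then obtain p where "p \<in> pos l" "sub l p = Leaf i" using Node by auto
    then show ?thesis by (auto intro!: bexI[of _ "False # p"])
  next
    case False
    then have "i \<in> set (leaves r)" using Node.prems by auto
    then obtain p where "p \<in> pos r" "sub r p = Leaf i" using Node by auto
    then show ?thesis by (auto intro!: bexI[of _ "True # p"])
  qed
qed

lemma sub_leaves: "p \<in> pos t \<Longrightarrow> set (leaves (sub t p)) \<subseteq> set (leaves t)"
proof (induction t arbitrary: p)
  case (Leaf a) then show ?case by auto
next
  case (Node l r)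
  then show ?case by (cases p) (auto, blast+)
qed

lemma leaf_uniq: "distinct (leaves t) \<Longrightarrow> p \<in> pos t \<Longrightarrow> q \<in> pos t \<Longrightarrow>
   sub t p = Leaf i \<Longrightarrow> sub t q = Leaf i \<Longrightarrow> p = q"
proof (induction t arbitrary: p q)
  case (Leaf a) then show ?case by auto
next
  case (Node l r)
  from Node.prems(2,3,4,5) obtain p' q' b c where pq: "p = b # p'" "q = c # q'"
    by (cases p; cases q) auto
  show ?case
  proof (cases b; cases c)
    assume "b" "c"
    then show ?thesis using Node pq by auto
  next
    assume "\<not>b" "\<not>c"
    then show ?thesis using Node pq by auto
  next
    assume bc: "b" "\<not>c"
    have "i \<in> set (leaves r)" using Node.prems pq bc sub_leaves[of p' r] by force
    moreover have "i \<in> set (leaves l)" using Node.prems pq bc sub_leaves[of q' l] by force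
    ultimately show ?thesis using Node.prems(1) by auto
  next
    assume bc: "\<not>b" "c"
    have "i \<in> set (leaves l)" using Node.prems pq bc sub_leaves[of p' l] by force
    moreover have "i \<in> set (leaves r)" using Node.prems pq bc sub_leaves[of q' r] by force
    ultimately show ?thesis using Node.prems(1) by auto
  qed
qed

lemma leaf_pos_eq: "distinct (leaves t) \<Longrightarrow> q \<in> pos t \<Longrightarrow> sub t q = Leaf i \<Longrightarrow> leaf_pos t i = q"
  unfolding leaf_pos_def by (rule the_equality) (auto intro: leaf_uniq)

lemma leaf_pos_spec: "distinct (leaves t) \<Longrightarrow> i \<in> set (leaves t) \<Longrightarrow>
   leaf_pos t i \<in> pos t \<and> sub t (leaf_pos t i) = Leaf i"
  using leaf_ex leaf_pos_eq by metis

lemma leaf_pos_l: "distinct (leaves (Node l r)) \<Longrightarrow> i \<in> set (leaves l) \<Longrightarrow>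
   leaf_pos (Node l r) i = False # leaf_pos l i"
  using leaf_pos_spec[of l i] by (intro leaf_pos_eq) auto

lemma leaf_pos_r: "distinct (leaves (Node l r)) \<Longrightarrow> i \<in> set (leaves r) \<Longrightarrow>
   leaf_pos (Node l r) i = True # leaf_pos r i"
  using leaf_pos_spec[of r i] by (intro leaf_pos_eq) auto

definition M :: "btree \<Rightarrow> bool list \<Rightarrow> bool list \<Rightarrow> nat" where
  "M t P R = Max {length v | v. v \<in> pos t \<and> prefix v P \<and> prefix v R}"

lemma M_same: "M (Node l r) (b # P) (b # R) = Suc (M (if b then r else l) P R)"
proof -
  let ?t = "if b then r else l"
  let ?S = "{length v | v. v \<in> pos ?t \<and> prefix v P \<and> prefix v R}"
  have eq: "{length v | v. v \<in> pos (Node l r) \<and> prefix v (b#P) \<and> prefix v (b#R)} = insert 0 (Suc ` ?S)" (is "?A = _")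
  proof
    show "?A \<subseteq> insert 0 (Suc ` ?S)" by (cases b) (auto simp: prefix_Cons)
  next
    show "insert 0 (Suc ` ?S) \<subseteq> ?A"
    proof
      fix x assume "x \<in> insert 0 (Suc ` ?S)"
      then consider "x = 0" | v where "x = Suc (length v)" "v \<in> pos ?t" "prefix v P" "prefix v R" by auto
      then show "x \<in> ?A"
      proof cases
        case 1 then show ?thesis by (auto intro!: exI[of _ "[]"])
      next
        case 2 then show ?thesis by (cases b) (auto intro!: exI[of _ "b # v"])
      qed
    qed
  qed
  have fin: "finite ?S" using finite_pos[of ?t] by simp
  have "0 \<in> ?S" using nil_pos[of ?t] by (auto intro!: exI[of _ "[]"])
  then have ne: "?S \<noteq> {}" by blast
  have "Max (Suc ` ?S) = Suc (Max ?S)" using mono_Max_commute[of Suc ?S] fin ne by (simp add: mono_def)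
  then show ?thesis unfolding M_def eq using fin ne by simp
qed

lemma M_diff: "b \<noteq> c \<Longrightarrow> M (Node l r) (b # P) (c # R) = 0"
proof -
  assume "b \<noteq> c"
  then have "{length v | v. v \<in> pos (Node l r) \<and> prefix v (b#P) \<and> prefix v (c#R)} = {0}"
    by (auto simp: prefix_Cons)
  then show ?thesis unfolding M_def by simp
qed

lemma phi_M: "phi t i j = M t (leaf_pos t i) (leaf_pos t j)"
  unfolding phi_def M_def by simp

lemma phi_ll: "distinct (leaves (Node l r)) \<Longrightarrow> i \<in> set (leaves l) \<Longrightarrow> j \<in> set (leaves l) \<Longrightarrow>
  phi (Node l r) i j = Suc (phi l i j)"
  using M_same[of l r False] by (simp add: phi_M leaf_pos_l)

lemma phi_rr: "distinct (leaves (Node l r)) \<Longrightarrow> i \<in> set (leaves r) \<Longrightarrow> j \<in> set (leaves r) \<Longrightarrow>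
  phi (Node l r) i j = Suc (phi r i j)"
  using M_same[of l r True] by (simp add: phi_M leaf_pos_r)

lemma phi_lr: "distinct (leaves (Node l r)) \<Longrightarrow> i \<in> set (leaves l) \<Longrightarrow> j \<in> set (leaves r) \<Longrightarrow>
  phi (Node l r) i j = 0"
  by (simp add: phi_M leaf_pos_l leaf_pos_r M_diff)

lemma phi_rl: "distinct (leaves (Node l r)) \<Longrightarrow> i \<in> set (leaves r) \<Longrightarrow> j \<in> set (leaves l) \<Longrightarrow>
  phi (Node l r) i j = 0"
  by (simp add: phi_M leaf_pos_l leaf_pos_r M_diff)

lemma sum_suc_pairs:
  assumes "finite I" "\<And>i j. (i,j) \<in> I \<Longrightarrow> f i j = Suc (g i j)"
  shows "(\<Sum>(i,j)\<in>I. f i j) = (\<Sum>(i,j)\<in>I. g i j) + card I"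
proof -
  have "(\<Sum>(i,j)\<in>I. f i j) = (\<Sum>x\<in>I. case x of (i,j) \<Rightarrow> g i j + 1)"
    using assms(2) by (intro sum.cong) auto
  also have "\<dots> = (\<Sum>(i,j)\<in>I. g i j) + (\<Sum>x\<in>I. 1)"
    by (subst sum.distrib[symmetric]) (intro sum.cong, auto)
  finally show ?thesis by simp
qed

lemma Phi_Node:
  assumes d: "distinct (leaves (Node l r))"
  shows "Phi (Node l r) = Phi l + Phi r + (length (leaves l) choose 2) + (length (leaves r) choose 2)"
proof -
  let ?P = "\<lambda>A. {(i,j). i \<in> A \<and> j \<in> A \<and> (i::nat) < j}"
  let ?l = "set (leaves l)" and ?r = "set (leaves r)"
  let ?X = "{(i,j). ((i \<in> ?l \<and> j \<in> ?r) \<or> (i \<in> ?r \<and> j \<in> ?l)) \<and> i < j}"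
  have dl: "distinct (leaves l)" and dr: "distinct (leaves r)" and disj: "?l \<inter> ?r = {}" using d by auto
  have I: "?P (L (Node l r)) = ?P ?l \<union> (?P ?r \<union> ?X)" unfolding L_def by auto
  have fin: "finite (?P A)" if "finite A" for A
    by (rule finite_subset[of _ "A \<times> A"]) (use that in auto)
  have finX: "finite ?X" by (rule finite_subset[of _ "(?l \<union> ?r) \<times> (?l \<union> ?r)"]) auto
  have s: "Phi (Node l r) = (\<Sum>(i,j)\<in>?P ?l. phi (Node l r) i j) + ((\<Sum>(i,j)\<in>?P ?r. phi (Node l r) i j)
      + (\<Sum>(i,j)\<in>?X. phi (Node l r) i j))"
    unfolding Phi_def I
    apply (subst sum.union_disjoint)
    using fin finX disj apply auto[3]
    apply (subst sum.union_disjoint)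
    using fin finX disj apply auto
    done
  have x0: "(\<Sum>(i,j)\<in>?X. phi (Node l r) i j) = 0"
    using d by (intro sum.neutral) (auto simp: phi_lr phi_rl)
  have sl: "(\<Sum>(i,j)\<in>?P ?l. phi (Node l r) i j) = Phi l + (length (leaves l) choose 2)"
    unfolding Phi_def L_def
    apply (subst sum_suc_pairs[where g="phi l"])
    using fin d apply (auto simp: phi_ll)[2]
    using card_pairs[of ?l] distinct_card[OF dl] by simp
  have sr: "(\<Sum>(i,j)\<in>?P ?r. phi (Node l r) i j) = Phi r + (length (leaves r) choose 2)"
    unfolding Phi_def L_def
    apply (subst sum_suc_pairs[where g="phi r"])
    using fin d apply (auto simp: phi_rr)[2]
    using card_pairs[of ?r] distinct_card[OF dr] by simp
  show ?thesis using s x0 sl sr by simp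
qed

lemma Phi_Q: "distinct (leaves t) \<Longrightarrow> Phi t = Q t"
proof (induction t)
  case (Leaf a)
  have e: "{(i,j). i \<in> L (Leaf a) \<and> j \<in> L (Leaf a) \<and> (i::nat) < j} = {}" by (auto simp: L_def)
  show ?case unfolding Phi_def e by simp
next
  case (Node l r) then show ?case by (simp add: Phi_Node)
qed

fun repl :: "btree \<Rightarrow> bool list \<Rightarrow> btree \<Rightarrow> btree" where
  "repl t [] s = s"
| "repl (Node l r) (False # p) s = Node (repl l p s) r"
| "repl (Node l r) (True # p) s = Node l (repl r p s)"
| "repl (Leaf a) (b # p) s = Leaf a"

lemma repl_mset: "p \<in> pos t \<Longrightarrow> mset (leaves s) = mset (leaves (sub t p)) \<Longrightarrow>
   mset (leaves (repl t p s)) = mset (leaves t)"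
  by (induction t arbitrary: p) auto

lemma repl_len: "p \<in> pos t \<Longrightarrow> length (leaves s) = length (leaves (sub t p)) \<Longrightarrow>
   length (leaves (repl t p s)) = length (leaves t)"
  by (induction t arbitrary: p) auto

lemma repl_Q: "p \<in> pos t \<Longrightarrow> length (leaves s) = length (leaves (sub t p)) \<Longrightarrow>
   Q (repl t p s) + Q (sub t p) = Q t + Q s"
  by (induction t arbitrary: p) (auto simp: repl_len)

lemma iso_Q: "tree_iso a b \<Longrightarrow> mset (leaves a) = mset (leaves b) \<and> Q a = Q b"
  by (induction rule: tree_iso.induct) (auto simp: add_ac, metis size_mset, metis size_mset add.commute)

lemma choose_Suc_mono: "(m choose k) \<le> (Suc m choose k)"
  by (cases k) auto

lemma choose_mono_l: "a \<le> (b::nat) \<Longrightarrow> (a choose k) \<le> (b choose k)"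
proof (induction b rule: dec_induct)
  case base then show ?case by simp
next
  case (step b) then show ?case using choose_Suc_mono[of b k] by linarith
qed

theorem mainTheorem9:
  fixes T1 T2 T :: btree and m n :: nat
  assumes "forest2_on {1..m - 1} T1 T2"
    and "card (L T1) \<ge> card (L T2)"
    and "phylo_on {1..n} T"
    and "\<exists>p \<in> pos T. tree_iso (sub T p) (Node (Node T1 T2) (Leaf m))"
    and "\<forall>T'. phylo_on {1..n} T' \<longrightarrow> Phi T \<le> Phi T'"
  shows "card (L T1) = 1 \<and> card (L T2) = 1"
proof -
  have d1: "distinct (leaves T1)" and d2: "distinct (leaves T2)"
    using assms(1) by (auto simp: forest2_on_def phylo_on_def)
  define x1 where "x1 = length (leaves T1)"
  define x2 where "x2 = length (leaves T2)"
  have c1: "card (L T1) = x1" using distinct_card[OF d1] by (simp add: L_def x1_def)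
  have c2: "card (L T2) = x2" using distinct_card[OF d2] by (simp add: L_def x2_def)
  have x2p: "x2 \<ge> 1" using leaves_ne[of T2] by (simp add: x2_def Suc_le_eq)
  have x1p: "x1 \<ge> 1" using leaves_ne[of T1] by (simp add: x1_def Suc_le_eq)
  have x12: "x2 \<le> x1" using assms(2) c1 c2 by simp
  obtain p where p: "p \<in> pos T" and iso: "tree_iso (sub T p) (Node (Node T1 T2) (Leaf m))"
    using assms(4) by blast
  let ?S0 = "Node (Node T1 T2) (Leaf m)"
  let ?s = "Node T1 (Node T2 (Leaf m))"
  have ms: "mset (leaves (sub T p)) = mset (leaves ?s)" and qs: "Q (sub T p) = Q ?S0"
    using iso_Q[OF iso] by (auto simp: add_ac)
  define T' where "T' = repl T p ?s"
  have mT': "mset (leaves T') = mset (leaves T)"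
    unfolding T'_def using repl_mset[OF p] ms by simp
  have dT: "distinct (leaves T)" and sT: "set (leaves T) = {1..n}" using assms(3) by (auto simp: phylo_on_def)
  have ph: "phylo_on {1..n} T'" unfolding phylo_on_def
    using mT' dT sT by (metis mset_eq_imp_distinct_iff mset_eq_setD)
  have "Phi T \<le> Phi T'" using assms(5) ph by blast
  moreover have "Phi T = Q T" using Phi_Q[OF dT] .
  moreover have "Phi T' = Q T'" using Phi_Q ph by (auto simp: phylo_on_def)
  moreover have "Q T' + Q (sub T p) = Q T + Q ?s"
    unfolding T'_def using repl_Q[OF p] ms by (metis size_mset)
  ultimately have "Q T + Q ?S0 \<le> Q T + Q ?s" using qs by linarith
  then have le: "(x1 + x2 choose 2) \<le> (Suc x2 choose 2)" by (simp add: x1_def x2_def)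
  have "x1 \<le> 1"
  proof (rule ccontr)
    assume "\<not> x1 \<le> 1"
    then have "Suc (Suc x2) \<le> x1 + x2" by simp
    then have "(Suc (Suc x2) choose 2) \<le> (x1 + x2 choose 2)" by (rule choose_mono_l)
    moreover have "(Suc (Suc x2) choose 2) = Suc x2 + (Suc x2 choose 2)"
      by (simp add: numeral_2_eq_2)
    ultimately show False using le x2p by linarith
  qed
  then show ?thesis using c1 c2 x1p x2p x12 by simp
qed

end
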